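(* Let $A^1,A^2,A^3$ be three disjoint cubic graphs with $v(A^i)\equiv 0\pmod 6$ for each $i$, let $a^i\in V(A^i)$ with $N(a^i,A^i)=\{a^i_1,a^i_2,a^i_3\}$, and let $G=Y(A^1,a^1;A^2,a^2;A^3,a^3)$. Let $P$ be a $\Lambda$-factor of $G$. For $i\in\{1,2,3\}$ let $D^i$ be the set of edges of $G$ with exactly one end in $V(A^i-a^i)$ (i.e. $D^i=\{a^i_jz_j: j\in\{1,2,3\}\}$), and let $P^i$ be the union of the components of $P$ that contain an edge of $D^i$. Then the number of components of $P^i$ is $1$ or $2$, for every $i\in\{1,2,3\}$.
   Context: Graphs are finite, undirected, without loops or multiple edges; $v(G)=|V(G)|$; $N(x,G)$ is the set of neighbours of $x$. The graph $Y(A^1,a^1;A^2,a^2;A^3,a^3)$ is obtained from $(A^1-a^1)\cup(A^2-a^2)\cup(A^3-a^3)$ by adding three new vertices $z_1,z_2,z_3$ and the nine new edges $z_ja^i_j$, $i,j\in\{1,2,3\}$. A $\Lambda$-factor of $G$ is a spanning subgraph each of whose components is a path on 3 vertices. *)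

theory Defs
  imports Main
begin

definition graph :: "'a set \<Rightarrow> 'a set set \<Rightarrow> bool" where
  "graph V E \<longleftrightarrow> finite V \<and> (\<forall>e\<in>E. \<exists>u v. u \<noteq> v \<and> u \<in> V \<and> v \<in> V \<and> e = {u, v})"

definition nbrs :: "'a set set \<Rightarrow> 'a \<Rightarrow> 'a set" where
  "nbrs E x = {y. {x, y} \<in> E}"

definition cubic :: "'a set \<Rightarrow> 'a set set \<Rightarrow> bool" where
  "cubic V E \<longleftrightarrow> graph V E \<and> (\<forall>x\<in>V. card (nbrs E x) = 3)"

definition del_verts :: "'a set \<Rightarrow> 'a \<Rightarrow> 'a set" where
  "del_verts V a = V - {a}"

definition del_edges :: "'a set set \<Rightarrow> 'a \<Rightarrow> 'a set set" where
  "del_edges E a = {e \<in> E. a \<notin> e}"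

text \<open>The graph Y(A1,a1;A2,a2;A3,a3): graphs indexed by i in {1,2,3}, nb i j is the
  j-th neighbour of a i in A i, z j are the three new vertices.\<close>
definition Y_verts :: "(nat \<Rightarrow> 'a set) \<Rightarrow> (nat \<Rightarrow> 'a) \<Rightarrow> (nat \<Rightarrow> 'a) \<Rightarrow> 'a set" where
  "Y_verts V a z = (\<Union>i\<in>{1,2,3}. del_verts (V i) (a i)) \<union> {z 1, z 2, z 3}"

definition Y_edges :: "(nat \<Rightarrow> 'a set set) \<Rightarrow> (nat \<Rightarrow> 'a) \<Rightarrow> (nat \<Rightarrow> nat \<Rightarrow> 'a)
    \<Rightarrow> (nat \<Rightarrow> 'a) \<Rightarrow> 'a set set" where
  "Y_edges E a nb z = (\<Union>i\<in>{1,2,3}. del_edges (E i) (a i))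
      \<union> {{z j, nb i j} | i j. i \<in> {1,2,3} \<and> j \<in> {1,2,3}}"

definition adj :: "'a set set \<Rightarrow> ('a \<times> 'a) set" where
  "adj F = {(u, v). {u, v} \<in> F}"

definition comp :: "'a set \<Rightarrow> 'a set set \<Rightarrow> 'a \<Rightarrow> 'a set" where
  "comp V F x = {y \<in> V. (x, y) \<in> (adj F)\<^sup>*}"

definition components :: "'a set \<Rightarrow> 'a set set \<Rightarrow> 'a set set" where
  "components V F = comp V F ` V"

text \<open>A Lambda-factor of (V,E): a spanning subgraph (V,F), F a subset of E, each of whose
  components is a path on 3 vertices (a connected graph with 3 vertices and 2 edges).\<close>
definition Lambda_factor :: "'a set \<Rightarrow> 'a set set \<Rightarrow> 'a set set \<Rightarrow> bool" where
  "Lambda_factor V E F \<longleftrightarrow> F \<subseteq> E \<and>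
     (\<forall>C \<in> components V F. card C = 3 \<and> card {e \<in> F. e \<subseteq> C} = 2)"

end

theory Submission
  imports Defs
begin

lemma aux_L: "(n::nat) > 0 \<Longrightarrow> n mod 6 = 0 \<Longrightarrow> (n - 1) mod 3 = 2"
proof -
  assume "n > 0" "n mod 6 = 0"
  then obtain m where m: "n = 6*m" "m > 0" by auto
  hence "n - 1 = 3*(2*m-1) + 2" by simp
  moreover have "(3*k + 2) mod 3 = (2::nat)" for k by presburger
  ultimately show ?thesis by metis
qed
lemma aux_L2: "(s::nat) mod 3 = 2 \<Longrightarrow> s = t + 3*c \<Longrightarrow> t mod 3 = 2" by simp
lemma aux_L3: "(x::nat) \<ge> 3 \<Longrightarrow> x mod 3 = 2 \<Longrightarrow> x \<ge> 5"
  by (cases "x = 3 \<or> x = 4") auto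
lemma aux_L4: "(x::nat) mod 3 = 2 \<Longrightarrow> x \<ge> 2"
  by (cases "x = 0 \<or> x = 1") auto

theorem mainTheorem7:
  fixes V :: "nat \<Rightarrow> 'a set" and E :: "nat \<Rightarrow> 'a set set"
    and a :: "nat \<Rightarrow> 'a" and nb :: "nat \<Rightarrow> nat \<Rightarrow> 'a" and z :: "nat \<Rightarrow> 'a"
    and F :: "'a set set"
  assumes cub: "\<forall>i\<in>{1,2,3}. cubic (V i) (E i)"
    and disj: "\<forall>i\<in>{1,2,3}. \<forall>j\<in>{1,2,3}. i \<noteq> j \<longrightarrow> V i \<inter> V j = {}"
    and six: "\<forall>i\<in>{1,2,3}. card (V i) mod 6 = 0"
    and a_in: "\<forall>i\<in>{1,2,3}. a i \<in> V i"
    and nbr: "\<forall>i\<in>{1,2,3}. nbrs (E i) (a i) = {nb i 1, nb i 2, nb i 3}"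
    and z_dist: "z 1 \<noteq> z 2" "z 1 \<noteq> z 3" "z 2 \<noteq> z 3"
    and z_new: "\<forall>i\<in>{1,2,3}. \<forall>j\<in>{1,2,3}. z j \<notin> V i"
    and P: "Lambda_factor (Y_verts V a z) (Y_edges E a nb z) F"
  shows "\<forall>i\<in>{1,2,3}.
     card {C \<in> components (Y_verts V a z) F.
             \<exists>e \<in> F. e \<subseteq> C \<and>
               e \<in> {d \<in> Y_edges E a nb z. card (d \<inter> del_verts (V i) (a i)) = 1}}
     \<in> {1, 2}"
proof -
  define W where "W = Y_verts V a z"
  define S where "S k = V k - {a k}" for k
  define R where "R = adj F"
  define cp where "cp = comp W F"
  have cpd: "cp x = {y \<in> W. (x,y) \<in> R\<^sup>*}" for x unfolding cp_def comp_def R_def by simp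
  have grk: "graph (V k) (E k)" if "k \<in> {1,2,3}" for k using bspec[OF cub that] unfolding cubic_def by simp
  have disjV: "k = k'" if "x \<in> V k" "x \<in> V k'" "k\<in>{1,2,3}" "k' \<in>{1,2,3}" for x k k'
    using bspec[OF bspec[OF disj that(3)] that(4)] that(1,2) by blast
  have zV: "z j \<notin> V k" if "j\<in>{1,2,3}" "k\<in>{1,2,3}" for j k using bspec[OF bspec[OF z_new that(2)] that(1)] .
  have aV: "a k \<in> V k" if "k\<in>{1,2,3}" for k using bspec[OF a_in that] .
  have finV: "finite (V k)" if "k \<in> {1,2,3}" for k using grk[OF that] unfolding graph_def by blast
  have Eedge: "\<exists>u v. u \<noteq> v \<and> u \<in> V k \<and> v \<in> V k \<and> e = {u,v}" if "k \<in> {1,2,3}" "e \<in> E k" for k e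
    using grk[OF that(1)] that(2) unfolding graph_def by (elim conjE) (rule bspec)
  have nbV: "nb k j \<in> V k \<and> nb k j \<noteq> a k" if "k \<in> {1,2,3}" "j \<in> {1,2,3}" for k j
  proof -
    have "nb k j \<in> nbrs (E k) (a k)" using bspec[OF nbr that(1)] that(2) by auto
    hence "{a k, nb k j} \<in> E k" by (simp add: nbrs_def)
    hence "\<exists>u v. u \<noteq> v \<and> u \<in> V k \<and> v \<in> V k \<and> {a k, nb k j} = {u,v}" by (rule Eedge[OF that(1)])
    then obtain u v where "u\<noteq>v" "u \<in> V k" "v \<in> V k" "{a k, nb k j} = {u,v}" by blast
    thus ?thesis by (auto simp: doubleton_eq_iff)
  qed
  have nbd: "nb k 1 \<noteq> nb k 2 \<and> nb k 1 \<noteq> nb k 3 \<and> nb k 2 \<noteq> nb k 3" if "k \<in> {1,2,3}" for k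
  proof -
    have "cubic (V k) (E k)" "a k \<in> V k" using bspec[OF cub that] aV[OF that] by auto
    hence "card (nbrs (E k) (a k)) = 3" unfolding cubic_def by blast
    hence "card {nb k 1, nb k 2, nb k 3} = 3" using bspec[OF nbr that] by simp
    thus ?thesis by (auto simp: card_insert_if split: if_splits)
  qed
  have FE: "F \<subseteq> Y_edges E a nb z" using P unfolding Lambda_factor_def by blast
  have edge_cases: "(\<exists>k\<in>{1,2,3}. \<exists>u v. u \<noteq> v \<and> u \<in> S k \<and> v \<in> S k \<and> e = {u,v})
      \<or> (\<exists>k\<in>{1,2,3}. \<exists>j\<in>{1,2,3}. e = {z j, nb k j})" if "e \<in> F" for e
  proof -
    have "e \<in> Y_edges E a nb z" using FE that by blast
    then consider (A) k where "k\<in>{1,2,3}" "e \<in> E k" "a k \<notin> e"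
      | (B) k j where "k\<in>{1,2,3}" "j\<in>{1,2,3}" "e = {z j, nb k j}"
      unfolding Y_edges_def del_edges_def by blast
    then show ?thesis
    proof cases
      case A
      then obtain u v where "u \<noteq> v" "u \<in> V k" "v \<in> V k" "e = {u,v}" using Eedge by blast
      then show ?thesis using A unfolding S_def by blast
    next
      case B then show ?thesis by blast
    qed
  qed
  have one_step: "w \<in> S k \<or> (\<exists>j\<in>{1,2,3}. w = z j \<and> {z j, nb k j} \<in> F)"
    if "k\<in>{1,2,3}" "y \<in> S k" "{y,w} \<in> F" for k y w
  proof -
    from edge_cases[OF that(3)] show ?thesis
    proof
      assume "\<exists>k'\<in>{1,2,3}. \<exists>u v. u \<noteq> v \<and> u \<in> S k' \<and> v \<in> S k' \<and> {y,w} = {u,v}"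
      then obtain k' u v where kk: "k'\<in>{1,2,3}" "u \<in> S k'" "v \<in> S k'" "{y,w} = {u,v}" by blast
      then have yw: "y \<in> S k'" "w \<in> S k'" by (auto simp: doubleton_eq_iff)
      with disjV that kk(1) have "k' = k" unfolding S_def by blast
      with yw show ?thesis by simp
    next
      assume "\<exists>k'\<in>{1,2,3}. \<exists>j\<in>{1,2,3}. {y,w} = {z j, nb k' j}"
      then obtain k' j where kj: "k'\<in>{1,2,3}" "j\<in>{1,2,3}" "{y,w} = {z j, nb k' j}" by blast
      have "y \<noteq> z j" using zV[OF kj(2) that(1)] that(2) unfolding S_def by blast
      hence yw: "y = nb k' j" "w = z j" using kj(3) by (auto simp: doubleton_eq_iff)
      moreover have "k' = k" using nbV[OF kj(1,2)] that(1,2) disjV[of y k' k] kj(1) yw unfolding S_def by blast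
      ultimately show ?thesis using that(3) kj by (auto simp: insert_commute)
    qed
  qed
  have reach: "w \<in> S k \<or> (\<exists>j\<in>{1,2,3}. {z j, nb k j} \<in> F \<and> (x, z j) \<in> R\<^sup>*)"
    if "k\<in>{1,2,3}" "x \<in> S k" "(x,w) \<in> R\<^sup>*" for x w k
    using that(3)
  proof (induction rule: rtrancl_induct)
    case base show ?case using that(2) by simp
  next
    case (step y w)
    from step.IH show ?case
    proof
      assume "y \<in> S k"
      moreover have "{y,w} \<in> F" using step.hyps(2) unfolding R_def adj_def by simp
      ultimately have "w \<in> S k \<or> (\<exists>j\<in>{1,2,3}. w = z j \<and> {z j, nb k j} \<in> F)"
        using one_step that(1) by blast
      thus ?thesis using step.hyps(1,2) by (auto intro: rtrancl_into_rtrancl)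
    next
      assume "\<exists>j\<in>{1,2,3}. {z j, nb k j} \<in> F \<and> (x, z j) \<in> R\<^sup>*" thus ?thesis by blast
    qed
  qed
  have symR: "(v,u) \<in> R" if "(u,v) \<in> R" for u v using that unfolding R_def adj_def by (auto simp: insert_commute)
  have symRs: "(v,u) \<in> R\<^sup>*" if "(u,v) \<in> R\<^sup>*" for u v using that
    by (induction rule: rtrancl_induct) (auto intro: converse_rtrancl_into_rtrancl symR)
  have cp_self: "x \<in> cp x" if "x \<in> W" for x using that cpd by simp
  have cp_eq: "cp y = cp x" if "y \<in> cp x" for x y
  proof -
    have xy: "(x,y) \<in> R\<^sup>*" using that cpd by simp
    hence yx: "(y,x) \<in> R\<^sup>*" using symRs by blast
    show ?thesis unfolding cpd using xy yx by (meson rtrancl_trans)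
  qed
  have cp_sub: "cp x \<subseteq> W" for x using cpd by auto
  have comps: "components W F = cp ` W" unfolding components_def cp_def by simp
  have cp_card: "card (cp x) = 3" if "x \<in> W" for x
    using P that comps unfolding Lambda_factor_def W_def[symmetric] by auto
  have finW: "finite W" unfolding W_def Y_verts_def del_verts_def using finV by auto
  have zW: "z j \<in> W" if "j\<in>{1,2,3}" for j using that unfolding W_def Y_verts_def by auto
  have SW: "S k \<subseteq> W" if "k\<in>{1,2,3}" for k using that unfolding W_def Y_verts_def del_verts_def S_def by auto
  have zS: "z j \<notin> S k" if "j\<in>{1,2,3}" "k\<in>{1,2,3}" for j k using zV[OF that] unfolding S_def by blast
  have SS: "S k \<inter> S k' = {}" if "k\<in>{1,2,3}" "k'\<in>{1,2,3}" "k \<noteq> k'" for k k'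
    using bspec[OF bspec[OF disj that(1)] that(2)] that(3) unfolding S_def by blast
  have cardS: "card (S k) mod 3 = 2" if "k\<in>{1,2,3}" for k
  proof -
    have c: "card (S k) = card (V k) - 1" unfolding S_def using aV[OF that] finV[OF that] by simp
    have "card (V k) > 0" using aV[OF that] finV[OF that] card_gt_0_iff by blast
    moreover have "card (V k) mod 6 = 0" using bspec[OF six that] .
    ultimately show ?thesis unfolding c by (rule aux_L)
  qed
  define M where "M = cp (z 1) \<union> cp (z 2) \<union> cp (z 3)"
  have MW: "M \<subseteq> W" unfolding M_def using cp_sub by blast
  have finM: "finite M" using MW finW finite_subset by blast
  have key: "card (S k \<inter> M) mod 3 = 2" if k: "k\<in>{1,2,3}" for k
  proof -
    define X where "X = S k - M"
    have sub: "cp x \<subseteq> X" if x: "x \<in> X" for x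
    proof
      fix w assume w: "w \<in> cp x"
      hence xw: "(x,w) \<in> R\<^sup>*" using cpd by auto
      have xS: "x \<in> S k" using x X_def by auto
      have "w \<in> S k"
      proof -
        { assume "\<exists>j\<in>{1,2,3}. {z j, nb k j} \<in> F \<and> (x, z j) \<in> R\<^sup>*"
          then obtain j where j: "j\<in>{1,2,3}" "(x, z j) \<in> R\<^sup>*" by blast
          hence "z j \<in> cp x" using cpd zW by auto
          hence "cp (z j) = cp x" by (rule cp_eq)
          moreover have "x \<in> cp x" using cp_self xS SW k by blast
          ultimately have "x \<in> M" using j(1) unfolding M_def by auto
          hence False using x X_def by auto }
        thus ?thesis using reach[OF k xS xw] by blast
      qed
      moreover have "w \<notin> M"
      proof
        assume "w \<in> M"
        then obtain j where "w \<in> cp (z j)" "j\<in>{1,2,3}" unfolding M_def by auto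
        hence "cp w = cp (z j)" by (simp add: cp_eq)
        moreover have "cp w = cp x" using w cp_eq by blast
        moreover have "x \<in> cp x" using cp_self xS SW k x X_def by blast
        ultimately have "x \<in> M" using \<open>j\<in>{1,2,3}\<close> unfolding M_def by auto
        thus False using x X_def by auto
      qed
      ultimately show "w \<in> X" using X_def by auto
    qed
    have XW: "X \<subseteq> W" using SW k X_def by auto
    have U: "\<Union> (cp ` X) = X" using sub cp_self XW by blast
    have pd: "pairwise disjnt (cp ` X)"
      unfolding pairwise_def disjnt_def
    proof (intro ballI impI)
      fix A B assume "A \<in> cp ` X" "B \<in> cp ` X" "A \<noteq> B"
      then obtain x y where "A = cp x" "B = cp y" by blast
      thus "A \<inter> B = {}" using \<open>A \<noteq> B\<close> cp_eq by blast
    qed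
    have finX: "finite X" using XW finW finite_subset by blast
    have "card X = sum card (cp ` X)"
    proof -
      have "card (\<Union> (cp ` X)) = sum card (cp ` X)"
        by (rule card_Union_disjoint[OF pd]) (use finite_subset[OF cp_sub finW] in blast)
      thus ?thesis using U by simp
    qed
    also have "\<dots> = sum (\<lambda>_. 3) (cp ` X)" using cp_card XW by (intro sum.cong) auto
    also have "\<dots> = 3 * card (cp ` X)" by simp
    finally have cX: "card X = 3 * card (cp ` X)" .
    have finSk: "finite (S k)" using SW k finW finite_subset by blast
    have "card (S k) = card (S k \<inter> M) + card X"
      unfolding X_def using finSk card_Int_Diff by blast
    thus ?thesis using cardS[OF k] cX aux_L2 by metis
  qed
  show ?thesis
  proof (intro ballI)
    fix i :: nat assume i: "i \<in> {1,2,3}"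
    have dv: "del_verts (V i) (a i) = S i" unfolding del_verts_def S_def by simp
    define Q where "Q = {C \<in> components (Y_verts V a z) F.
             \<exists>e \<in> F. e \<subseteq> C \<and>
               e \<in> {d \<in> Y_edges E a nb z. card (d \<inter> del_verts (V i) (a i)) = 1}}"
    have Dedge: "\<exists>j\<in>{1,2,3}. e = {z j, nb i j}" if e: "e \<in> F" "card (e \<inter> S i) = 1" for e
    proof -
      from edge_cases[OF e(1)] show ?thesis
      proof
        assume "\<exists>k\<in>{1,2,3}. \<exists>u v. u \<noteq> v \<and> u \<in> S k \<and> v \<in> S k \<and> e = {u,v}"
        then obtain k u v where kk: "k\<in>{1,2,3}" "u \<noteq> v" "u \<in> S k" "v \<in> S k" "e = {u,v}" by blast
        show ?thesis
        proof (cases "k = i")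
          case True
          hence "e \<inter> S i = {u,v}" using kk by auto
          thus ?thesis using e(2) kk(2) by simp
        next
          case False
          hence "e \<inter> S i = {}" using kk SS[OF kk(1) i False] by auto
          thus ?thesis using e(2) by simp
        qed
      next
        assume "\<exists>k\<in>{1,2,3}. \<exists>j\<in>{1,2,3}. e = {z j, nb k j}"
        then obtain k j where kj: "k\<in>{1,2,3}" "j\<in>{1,2,3}" "e = {z j, nb k j}" by blast
        show ?thesis
        proof (cases "k = i")
          case True thus ?thesis using kj by blast
        next
          case False
          have "nb k j \<notin> S i" using nbV[OF kj(1,2)] disjV[of "nb k j" k i] kj(1) i False
            unfolding S_def by blast
          hence "e \<inter> S i = {}" using kj zS[OF kj(2) i] by auto
          thus ?thesis using e(2) by simp
        qed
      qed
    qed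
    have Qsub: "Q \<subseteq> {cp (z 1), cp (z 2), cp (z 3)}"
    proof
      fix C assume "C \<in> Q"
      then obtain x e where x: "x \<in> W" "C = cp x" and e: "e \<in> F" "e \<subseteq> C" "card (e \<inter> S i) = 1"
        unfolding Q_def comps[unfolded W_def] dv W_def by blast
      obtain j where j: "j\<in>{1,2,3}" "e = {z j, nb i j}" using Dedge e(1,3) by blast
      hence "z j \<in> cp x" using e(2) x by auto
      hence "cp (z j) = C" using cp_eq x by blast
      thus "C \<in> {cp (z 1), cp (z 2), cp (z 3)}" using j by auto
    qed
    have finQ: "finite Q" using Qsub finite_subset by blast
    have Qne: "Q \<noteq> {}"
    proof -
      have "card (S i \<inter> M) mod 3 = 2" using key i by blast
      hence "S i \<inter> M \<noteq> {}" by (metis card.empty mod_0 zero_neq_numeral)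
      then obtain y where y: "y \<in> S i" "y \<in> M" by blast
      then obtain j where j: "j\<in>{1,2,3}" "y \<in> cp (z j)" unfolding M_def by auto
      hence "(z j, y) \<in> R\<^sup>*" using cpd by auto
      hence "(y, z j) \<in> R\<^sup>*" using symRs by blast
      from reach[OF i y(1) this] zS[OF j(1) i]
      obtain j' where j': "j'\<in>{1,2,3}" "{z j', nb i j'} \<in> F" "(y, z j') \<in> R\<^sup>*" by blast
      have "(z j', nb i j') \<in> R" using j'(2) unfolding R_def adj_def by simp
      hence "(y, nb i j') \<in> R\<^sup>*" using j'(3) by (meson rtrancl_into_rtrancl)
      moreover have "nb i j' \<in> W" using nbV[OF i j'(1)] SW[OF i] unfolding S_def by blast
      ultimately have sube: "{z j', nb i j'} \<subseteq> cp y" using cpd j'(3) zW[OF j'(1)] by auto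
      have ce: "card ({z j', nb i j'} \<inter> S i) = 1"
      proof -
        have "{z j', nb i j'} \<inter> S i = {nb i j'}" using nbV[OF i j'(1)] zS[OF j'(1) i] unfolding S_def by auto
        thus ?thesis by simp
      qed
      have "y \<in> W" using y SW i by blast
      hence c1: "cp y \<in> components (Y_verts V a z) F" using comps W_def by simp
      have c2: "{z j', nb i j'} \<in> {d \<in> Y_edges E a nb z. card (d \<inter> del_verts (V i) (a i)) = 1}"
        using FE j'(2) ce dv by auto
      have "cp y \<in> Q" unfolding Q_def using c1 c2 j'(2) sube by blast
      thus ?thesis by blast
    qed
    have Qn3: "card Q \<noteq> 3"
    proof
      assume c3: "card Q = 3"
      have "card {cp (z 1), cp (z 2), cp (z 3)} \<le> 3" by (simp add: card_insert_le_m1)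
      hence c3': "card {cp (z 1), cp (z 2), cp (z 3)} = 3" using card_mono[OF _ Qsub] c3 by simp
      hence Qeq: "Q = {cp (z 1), cp (z 2), cp (z 3)}" using card_subset_eq[OF _ Qsub] c3 by simp
      have dist: "cp (z 1) \<noteq> cp (z 2) \<and> cp (z 1) \<noteq> cp (z 3) \<and> cp (z 2) \<noteq> cp (z 3)"
        using c3' by (auto simp: card_insert_if split: if_splits)
      have nbM: "nb i j \<in> cp (z j)" if j: "j\<in>{1,2,3}" for j
      proof -
        have "cp (z j) \<in> Q" using Qeq j by auto
        then obtain e where e: "e \<in> F" "e \<subseteq> cp (z j)" "card (e \<inter> S i) = 1"
          unfolding Q_def dv by blast
        obtain j' where j': "j'\<in>{1,2,3}" "e = {z j', nb i j'}" using Dedge e(1,3) by blast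
        hence "z j' \<in> cp (z j)" using e(2) by auto
        hence "cp (z j') = cp (z j)" by (rule cp_eq)
        hence "j' = j" using dist j j' by auto
        thus ?thesis using j' e(2) by auto
      qed
      have "{nb i 1, nb i 2, nb i 3} \<subseteq> S i \<inter> M"
        using nbM nbV[OF i] unfolding M_def S_def by auto
      moreover have "finite (S i \<inter> M)" using finM by simp
      ultimately have "card {nb i 1, nb i 2, nb i 3} \<le> card (S i \<inter> M)" by (rule card_mono[rotated])
      moreover have "card {nb i 1, nb i 2, nb i 3} = 3" using nbd[OF i] by simp
      ultimately have ge3: "card (S i \<inter> M) \<ge> 3" by simp
      have m: "card (S k \<inter> M) mod 3 = 2" if "k\<in>{1,2,3}" for k using key that by blast
      have g5: "card (S i \<inter> M) \<ge> 5" using ge3 m[OF i] by (rule aux_L3)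
      have g2: "card (S k \<inter> M) \<ge> 2" if "k\<in>{1,2,3}" for k using m[OF that] by (rule aux_L4)
      have sum9: "card (S 1 \<inter> M) + card (S 2 \<inter> M) + card (S 3 \<inter> M) \<ge> 9"
        using i g5 g2[of 1] g2[of 2] g2[of 3] by auto
      have Z: "{z 1, z 2, z 3} \<subseteq> M" using cp_self zW unfolding M_def by auto
      have cZ: "card {z 1, z 2, z 3} = 3" using z_dist by simp
      have "{z 1, z 2, z 3} \<union> (S 1 \<inter> M) \<union> (S 2 \<inter> M) \<union> (S 3 \<inter> M) \<subseteq> M" using Z by auto
      hence "card ({z 1, z 2, z 3} \<union> (S 1 \<inter> M) \<union> (S 2 \<inter> M) \<union> (S 3 \<inter> M)) \<le> card M"
        using finM card_mono by blast
      moreover have "card ({z 1, z 2, z 3} \<union> (S 1 \<inter> M) \<union> (S 2 \<inter> M) \<union> (S 3 \<inter> M))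
          = 3 + card (S 1 \<inter> M) + card (S 2 \<inter> M) + card (S 3 \<inter> M)"
      proof -
        have f: "finite (S k \<inter> M)" for k using finM by simp
        have d1: "{z 1, z 2, z 3} \<inter> (S 1 \<inter> M) = {}" using zS by auto
        have d2: "({z 1, z 2, z 3} \<union> (S 1 \<inter> M)) \<inter> (S 2 \<inter> M) = {}" using zS SS[of 1 2] by auto
        have d3: "({z 1, z 2, z 3} \<union> (S 1 \<inter> M) \<union> (S 2 \<inter> M)) \<inter> (S 3 \<inter> M) = {}"
          using zS SS[of 1 3] SS[of 2 3] by auto
        show ?thesis using card_Un_disjoint[OF _ f d1] card_Un_disjoint[OF _ f d2]
            card_Un_disjoint[OF _ f d3] cZ f by simp
      qed
      moreover have "card M \<le> 9"
      proof -
        have "card M \<le> card (cp (z 1) \<union> cp (z 2)) + card (cp (z 3))" unfolding M_def by (rule card_Un_le)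
        also have "\<dots> \<le> card (cp (z 1)) + card (cp (z 2)) + card (cp (z 3))" using card_Un_le by simp
        also have "\<dots> = 9" using cp_card zW by simp
        finally show ?thesis .
      qed
      ultimately show False using sum9 by linarith
    qed
    have "card Q \<le> 3" by (rule le_trans[OF card_mono[OF _ Qsub]]) (auto simp: card_insert_le_m1)
    moreover have "card Q \<noteq> 0" using Qne finQ by simp
    ultimately have "card Q \<in> {1,2}" using Qn3 by auto
    thus "card {C \<in> components (Y_verts V a z) F.
             \<exists>e \<in> F. e \<subseteq> C \<and>
               e \<in> {d \<in> Y_edges E a nb z. card (d \<inter> del_verts (V i) (a i)) = 1}} \<in> {1, 2}"
      unfolding Q_def by simp
  qed
qed

end
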